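(* Let $G$ be an NCI-hypergraph. Then no two hyperedges of $G$ intersect.
   Context: A simple hypergraph is a pair $G=(V,E)$, $V$ finite, $E\subseteq 2^V$, assumed minimal (no edge properly contains another); $k$-edges with $k\ge 3$ are called hyperedges. The edge ideal $I(G)$ is the squarefree monomial ideal in $k[V]$ ($k$ a field) generated by $\prod_{v\in e}v$, $e\in E$. A nearly complete intersection is a squarefree monomial ideal $I$ that is not a complete intersection such that for every variable $x$ in the support of $I$, the ideal $I(x=1)$ (substituting $x=1$ in the generators) is a complete intersection. $G$ is an NCI-hypergraph if $I(G)$ is a nearly complete intersection. *)

theory Defs
  imports Main
begin

definition simple_hypergraph :: "'a set \<Rightarrow> 'a set set \<Rightarrow> bool" where
  "simple_hypergraph V E \<longleftrightarrow> finite V \<and> E \<subseteq> Pow V \<and>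
     (\<forall>e\<in>E. \<forall>f\<in>E. e \<subseteq> f \<longrightarrow> e = f)"

text \<open>Squarefree monomial ideals are encoded by a (finite) set F of supports:
  the set F stands for the ideal generated by the squarefree monomials
  prod_{v in S} v with S in F.  Its minimal monomial generators are the monomials
  whose supports are the inclusion-minimal members of F.\<close>
definition min_supports :: "'a set set \<Rightarrow> 'a set set" where
  "min_supports F = {S \<in> F. \<forall>T\<in>F. T \<subseteq> S \<longrightarrow> T = S}"

text \<open>Edge ideal I(G): generated by prod_{v in e} v for e in E.\<close>
definition edge_ideal :: "'a set set \<Rightarrow> 'a set set" where
  "edge_ideal E = E"

definition ideal_support :: "'a set set \<Rightarrow> 'a set" where
  "ideal_support F = \<Union> (min_supports F)"

text \<open>A monomial ideal is a complete intersection iff its minimal monomial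
  generators are pairwise coprime, i.e. (squarefree case) have pairwise
  disjoint supports.\<close>
definition sqfree_complete_intersection :: "'a set set \<Rightarrow> bool" where
  "sqfree_complete_intersection F \<longleftrightarrow>
     (\<forall>S\<in>min_supports F. \<forall>T\<in>min_supports F. S \<noteq> T \<longrightarrow> S \<inter> T = {})"

text \<open>I(x=1): substitute x = 1 in the generators.\<close>
definition subst_one :: "'a set set \<Rightarrow> 'a \<Rightarrow> 'a set set" where
  "subst_one F x = (\<lambda>S. S - {x}) ` F"

definition nearly_complete_intersection :: "'a set set \<Rightarrow> bool" where
  "nearly_complete_intersection F \<longleftrightarrow>
     \<not> sqfree_complete_intersection F \<and>
     (\<forall>x\<in>ideal_support F. sqfree_complete_intersection (subst_one F x))"

definition NCI_hypergraph :: "'a set \<Rightarrow> 'a set set \<Rightarrow> bool" where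
  "NCI_hypergraph V E \<longleftrightarrow> simple_hypergraph V E \<and>
     nearly_complete_intersection (edge_ideal E)"

definition hyperedge :: "'a set set \<Rightarrow> 'a set \<Rightarrow> bool" where
  "hyperedge E e \<longleftrightarrow> e \<in> E \<and> card e \<ge> 3"

end

theory Submission
  imports Defs
begin

lemma exists_min_below:
  assumes "finite S" "S \<in> F"
  shows "\<exists>m\<in>min_supports F. m \<subseteq> S"
  using assms
proof (induction "card S" arbitrary: S rule: less_induct)
  case less
  show ?case
  proof (cases "S \<in> min_supports F")
    case True then show ?thesis by blast
  next
    case False
    then obtain T where T: "T \<in> F" "T \<subset> S" using less.prems unfolding min_supports_def by blast
    have "card T < card S" using T less.prems by (simp add: psubset_card_mono)
    moreover have "finite T" using T less.prems finite_subset by blast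
    ultimately obtain m where "m \<in> min_supports F" "m \<subseteq> T" using less.hyps T by blast
    then show ?thesis using T by blast
  qed
qed

lemma min_subst:
  assumes anti: "\<forall>e\<in>E. \<forall>f\<in>E. e \<subseteq> f \<longrightarrow> e = f"
    and "g \<in> E" "y \<in> g"
  shows "g - {y} \<in> min_supports (subst_one E y)"
proof -
  have "\<And>h. h \<in> E \<Longrightarrow> h - {y} \<subseteq> g - {y} \<Longrightarrow> h - {y} = g - {y}"
  proof -
    fix h assume h: "h \<in> E" "h - {y} \<subseteq> g - {y}"
    then have "h \<subseteq> g" using assms(3) by blast
    then show "h - {y} = g - {y}" using anti h assms(2) by blast
  qed
  then show ?thesis unfolding min_supports_def subst_one_def using assms(2) by blast
qed

lemma ci_use:
  assumes "sqfree_complete_intersection F" "S \<in> min_supports F" "T \<in> min_supports F"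
    "z \<in> S" "z \<in> T"
  shows "S = T"
  using assms unfolding sqfree_complete_intersection_def by blast

theorem lemma3p2:
  assumes "NCI_hypergraph V E"
    and "hyperedge E e" and "hyperedge E f" and "e \<noteq> f"
  shows "e \<inter> f = {}"
proof (rule ccontr)
  assume "e \<inter> f \<noteq> {}"
  then obtain x where x: "x \<in> e" "x \<in> f" by blast
  have fV: "finite V" and EV: "E \<subseteq> Pow V" and anti: "\<forall>e\<in>E. \<forall>f\<in>E. e \<subseteq> f \<longrightarrow> e = f"
    using assms(1) unfolding NCI_hypergraph_def simple_hypergraph_def by auto
  have ms: "min_supports E = E" using anti unfolding min_supports_def by blast
  have CI: "\<And>y g. g \<in> E \<Longrightarrow> y \<in> g \<Longrightarrow> sqfree_complete_intersection (subst_one E y)"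
    using assms(1) unfolding NCI_hypergraph_def nearly_complete_intersection_def
      ideal_support_def edge_ideal_def ms by blast
  have fin: "\<And>g. g \<in> E \<Longrightarrow> finite g"
  proof -
    fix g assume "g \<in> E"
    then have "g \<subseteq> V" using EV by blast
    then show "finite g" using fV by (rule finite_subset)
  qed
  have eE: "e \<in> E" "card e \<ge> 3" and fE: "f \<in> E" "card f \<ge> 3"
    using assms(2,3) unfolding hyperedge_def by auto
  have one: "e \<inter> f = {x}"
  proof (rule ccontr)
    assume "e \<inter> f \<noteq> {x}"
    then obtain z where z: "z \<in> e" "z \<in> f" "z \<noteq> x" using x by blast
    have "e - {x} = f - {x}"
      using ci_use[OF CI[OF eE(1) x(1)] min_subst[OF anti eE(1) x(1)] min_subst[OF anti fE(1) x(2)]] z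
      by blast
    then have "e = f" using x by blast
    then show False using assms(4) by simp
  qed
  have "card (e - {x}) \<ge> 2" using eE fin[OF eE(1)] x by (simp add: card_Diff_singleton)
  then obtain a where a: "a \<in> e" "a \<noteq> x"
  proof -
    have "e - {x} \<noteq> {}" using \<open>card (e - {x}) \<ge> 2\<close> by (metis card.empty not_numeral_le_zero)
    then show ?thesis using that by blast
  qed
  have af: "a \<notin> f" using one a by blast
  have fin_sub: "finite f" using fin fE by blast
  have "f \<in> subst_one E a" unfolding subst_one_def using fE af by force
  then obtain m where m: "m \<in> min_supports (subst_one E a)" "m \<subseteq> f"
    using exists_min_below fin_sub by blast
  have emin: "e - {a} \<in> min_supports (subst_one E a)" using min_subst[OF anti eE(1) a(1)] .
  have mdisj: "m \<inter> (e - {a}) = {}"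
  proof (rule ccontr)
    assume "m \<inter> (e - {a}) \<noteq> {}"
    then obtain z where "z \<in> m" "z \<in> e - {a}" by blast
    then have "m = e - {a}" using ci_use[OF CI[OF eE(1) a(1)] m(1) emin] by blast
    then have "e - {a} \<subseteq> f" using m by blast
    then have "e \<subseteq> {x, a}" using one by blast
    then have "card e \<le> card {x, a}" by (simp add: card_mono)
    also have "\<dots> \<le> 2" by (simp add: card_insert_if)
    finally show False using eE by simp
  qed
  obtain h where h: "h \<in> E" "m = h - {a}" using m(1) unfolding min_supports_def subst_one_def by blast
  have ah: "a \<in> h"
  proof (rule ccontr)
    assume "a \<notin> h"
    then have "h \<subseteq> f" using h m by blast
    then have "h = f" using anti h fE by blast
    then show False using mdisj h x a by blast
  qed
  have "m \<noteq> {}"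
  proof
    assume "m = {}"
    then have "h \<subseteq> e" using h ah a by blast
    then have "h = e" using anti h eE by blast
    then show False using \<open>m = {}\<close> h x a by blast
  qed
  then obtain b where b: "b \<in> m" by blast
  have bf: "b \<in> f" "b \<noteq> x" "b \<noteq> a" "b \<in> h" using b m mdisj h x by auto
  have mb: "m = {b}"
  proof (rule ccontr)
    assume "m \<noteq> {b}"
    then obtain c where c: "c \<in> m" "c \<noteq> b" using b by blast
    have "f - {b} = h - {b}"
      using ci_use[OF CI[OF fE(1) bf(1)] min_subst[OF anti fE(1) bf(1)] min_subst[OF anti h(1) bf(4)]] c h m
      by blast
    then have "f = h" using bf by blast
    then show False using ah af by blast
  qed
  have hab: "h = {a, b}" using h mb ah by blast
  have habmin: "{a, b} \<in> min_supports (subst_one E x)"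
  proof -
    have xab: "x \<notin> {a,b}" using a bf by blast
    have "h - {x} = {a,b}" using hab xab by auto
    then have in1: "{a,b} \<in> subst_one E x" unfolding subst_one_def using h(1) by (metis imageI)
    have "\<And>k. k \<in> E \<Longrightarrow> k - {x} \<subseteq> {a, b} \<Longrightarrow> k - {x} = {a, b}"
    proof -
      fix k assume k: "k \<in> E" "k - {x} \<subseteq> {a, b}"
      show "k - {x} = {a, b}"
      proof (cases "x \<in> k")
        case False
        then have "k \<subseteq> {a,b}" using k by blast
        then have "k = {a,b}" using anti k h hab by blast
        then show ?thesis using xab by simp
      next
        case True
        show ?thesis
        proof (rule ccontr)
          assume ne: "k - {x} \<noteq> {a, b}"
          then have "k \<subseteq> {x, a} \<or> k \<subseteq> {x, b}" using k by blast
          then show False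
          proof
            assume "k \<subseteq> {x, a}"
            then have "k \<subseteq> e" using x a by blast
            then have "k = e" using anti k eE by blast
            then have "card e \<le> card {x, a}" using \<open>k \<subseteq> {x, a}\<close> by (simp add: card_mono)
            also have "\<dots> \<le> 2" by (simp add: card_insert_if)
            finally have "card e \<le> 2" .
            then show False using eE by simp
          next
            assume "k \<subseteq> {x, b}"
            then have "k \<subseteq> f" using x bf by blast
            then have "k = f" using anti k fE by blast
            then have "card f \<le> card {x, b}" using \<open>k \<subseteq> {x, b}\<close> by (simp add: card_mono)
            also have "\<dots> \<le> 2" by (simp add: card_insert_if)
            finally have "card f \<le> 2" .
            then show False using fE by simp
          qed
        qed
      qed
    qed
    then show ?thesis using in1 unfolding min_supports_def subst_one_def by blast
  qed
  have "e - {x} = {a, b}"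
    using ci_use[OF CI[OF eE(1) x(1)] min_subst[OF anti eE(1) x(1)] habmin] a by blast
  then have "b \<in> e" by blast
  then show False using one bf by blast
qed

end
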